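(* Let $0<p_0<1$, $\epsilon>0$, $\omega\ge0$, $\gamma_0\ge\gamma\ge0$. Let $\omega(t),\epsilon_x(t),\epsilon_y(t),\delta\gamma_t$ be real-valued functions of time with $|\omega(t)|\le\omega$, $\sqrt{\epsilon_x^2(t)+\epsilon_y^2(t)}\le\epsilon$, $|\delta\gamma_t|\le\gamma$, and set $H(t)=[1+\omega(t)]I_z+\epsilon_x(t)I_x+\epsilon_y(t)I_y$, $\gamma_t=\gamma_0+\delta\gamma_t$. Let the qubit density matrix $\rho_t$ evolve according to $$\dot\rho_t=-i[H(t),\rho_t]+\gamma_t\Big(\sigma_-\rho_t\sigma_+-\tfrac12\sigma_+\sigma_-\rho_t-\tfrac12\rho_t\sigma_+\sigma_-\Big)$$ with $\rho_0=|0\rangle\langle0|$. Let $$T_a=\frac{2p_0}{\sqrt{4\epsilon^2+(\gamma_0+\gamma)^2}+(\gamma_0+\gamma)}.$$ Then for every $t\in[0,T_a]$, $\rho_t\in\mathcal{D}_a=\{\rho:\langle0|\rho|0\rangle\ge1-p_0\}$; equivalently, if a projective measurement of $\sigma_z$ is made at time $t$, the probability of failure $p=\langle1|\rho_t|1\rangle$ is at most $p_0$.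
   Context: $\sigma_x,\sigma_y,\sigma_z$ are the Pauli matrices $\begin{pmatrix}0&1\\1&0\end{pmatrix},\begin{pmatrix}0&-i\\i&0\end{pmatrix},\begin{pmatrix}1&0\\0&-1\end{pmatrix}$, $I_j=\frac12\sigma_j$, $\sigma_-=\frac12(\sigma_x-i\sigma_y)$, $\sigma_+=\frac12(\sigma_x+i\sigma_y)$, $[A,B]=AB-BA$. $|0\rangle=(1,0)^T$, $|1\rangle=(0,1)^T$ are the eigenvectors of $\sigma_z$ with eigenvalues $1,-1$. Units with $\hbar=1$. The probability of failure is the probability that a $\sigma_z$ measurement yields $|1\rangle$. *)

theory Defs
  imports "HOL-Analysis.Analysis"
begin

type_synonym qmat = "complex ^ 2 ^ 2"
type_synonym qvec = "complex ^ 2"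

definition mat2 :: "complex \<Rightarrow> complex \<Rightarrow> complex \<Rightarrow> complex \<Rightarrow> qmat" where
  "mat2 a b c d = vector [vector [a, b], vector [c, d]]"

definition sigma_x :: qmat where "sigma_x = mat2 0 1 1 0"
definition sigma_y :: qmat where "sigma_y = mat2 0 (- \<i>) \<i> 0"
definition sigma_z :: qmat where "sigma_z = mat2 1 0 0 (-1)"

definition I_x :: qmat where "I_x = (1/2) *\<^sub>R sigma_x"
definition I_y :: qmat where "I_y = (1/2) *\<^sub>R sigma_y"
definition I_z :: qmat where "I_z = (1/2) *\<^sub>R sigma_z"

definition cscale :: "complex \<Rightarrow> qmat \<Rightarrow> qmat" where
  "cscale c A = (\<chi> i j. c * A $ i $ j)"

definition sigma_minus :: qmat where
  "sigma_minus = (1/2) *\<^sub>R (sigma_x - cscale \<i> sigma_y)"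
definition sigma_plus :: qmat where
  "sigma_plus = (1/2) *\<^sub>R (sigma_x + cscale \<i> sigma_y)"

definition commutator :: "qmat \<Rightarrow> qmat \<Rightarrow> qmat" where
  "commutator A B = A ** B - B ** A"

definition ket0 :: qvec where "ket0 = vector [1, 0]"
definition ket1 :: qvec where "ket1 = vector [0, 1]"

definition outer :: "qvec \<Rightarrow> qvec \<Rightarrow> qmat" where
  "outer u v = (\<chi> i j. u $ i * cnj (v $ j))"

definition melem :: "qvec \<Rightarrow> qmat \<Rightarrow> qvec \<Rightarrow> complex" where
  "melem u A v = (\<Sum>i\<in>UNIV. cnj (u $ i) * (A *v v) $ i)"

definition Ham :: "real \<Rightarrow> real \<Rightarrow> real \<Rightarrow> qmat" where
  "Ham w ex ey = (1 + w) *\<^sub>R I_z + ex *\<^sub>R I_x + ey *\<^sub>R I_y"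

definition lindblad_rhs :: "qmat \<Rightarrow> real \<Rightarrow> qmat \<Rightarrow> qmat" where
  "lindblad_rhs H g rho =
     cscale (- \<i>) (commutator H rho)
     + g *\<^sub>R (sigma_minus ** rho ** sigma_plus
               - (1/2) *\<^sub>R (sigma_plus ** sigma_minus ** rho)
               - (1/2) *\<^sub>R (rho ** sigma_plus ** sigma_minus))"

definition D_a :: "real \<Rightarrow> qmat set" where
  "D_a p0 = {rho. melem ket0 rho ket0 \<in> \<real> \<and> Re (melem ket0 rho ket0) \<ge> 1 - p0}"

definition T_a :: "real \<Rightarrow> real \<Rightarrow> real \<Rightarrow> real \<Rightarrow> real" where
  "T_a p0 eps gamma0 gamma =
     2 * p0 / (sqrt (4 * eps^2 + (gamma0 + gamma)^2) + (gamma0 + gamma))"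

end

theory Submission
  imports Defs
begin

lemmas U = lindblad_rhs_def Ham_def cscale_def commutator_def matrix_matrix_mult_def sum_2 sigma_minus_def sigma_plus_def sigma_x_def sigma_y_def sigma_z_def I_x_def I_y_def I_z_def mat2_def
lemma rhs11: "lindblad_rhs (Ham w ex ey) g r $ 1 $ 1 =
  - \<i> * ((ex - \<i>*ey)/2 * r$2$1 - (ex + \<i>*ey)/2 * r$1$2) - g * r$1$1"
  by (simp add: U; simp add: scaleR_conv_of_real field_simps; simp add: algebra_simps)
lemma rhs12: "lindblad_rhs (Ham w ex ey) g r $ 1 $ 2 =
  - \<i> * ((1+w) * r$1$2 + (ex - \<i>*ey)/2 * (r$2$2 - r$1$1)) - g/2 * r$1$2"
  by (simp add: U; simp add: scaleR_conv_of_real field_simps; simp add: algebra_simps)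
lemma rhs21: "lindblad_rhs (Ham w ex ey) g r $ 2 $ 1 =
  - \<i> * ((ex + \<i>*ey)/2 * (r$1$1 - r$2$2) - (1+w) * r$2$1) - g/2 * r$2$1"
  by (simp add: U; simp add: scaleR_conv_of_real field_simps; simp add: algebra_simps)
lemma rhs22: "lindblad_rhs (Ham w ex ey) g r $ 2 $ 2 =
  - \<i> * ((ex + \<i>*ey)/2 * r$1$2 - (ex - \<i>*ey)/2 * r$2$1) + g * r$1$1"
  by (simp add: U; simp add: scaleR_conv_of_real field_simps; simp add: algebra_simps)
lemma mel: "melem ket0 r ket0 = r$1$1"
  by (simp add: melem_def ket0_def sum_2 matrix_vector_mult_def)
lemma out: "outer ket0 ket0 = mat2 1 0 0 0"
  by (simp add: outer_def ket0_def mat2_def vec_eq_iff forall_2)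

lemma re11: "Re (lindblad_rhs (Ham w ex ey) g r $1$1) = (ex*Im(r$2$1) - ey*Re(r$2$1) - ex*Im(r$1$2) - ey*Re(r$1$2))/2 - g*Re(r$1$1)"
  by (simp add: rhs11 field_simps)
lemma im11: "Im (lindblad_rhs (Ham w ex ey) g r $1$1) = -(ex*Re(r$2$1) + ey*Im(r$2$1) - ex*Re(r$1$2) + ey*Im(r$1$2))/2 - g*Im(r$1$1)"
  by (simp add: rhs11 field_simps)
lemma re22: "Re (lindblad_rhs (Ham w ex ey) g r $2$2) = -(ex*Im(r$2$1) - ey*Re(r$2$1) - ex*Im(r$1$2) - ey*Re(r$1$2))/2 + g*Re(r$1$1)"
  by (simp add: rhs22 field_simps)
lemma im22: "Im (lindblad_rhs (Ham w ex ey) g r $2$2) = (ex*Re(r$2$1) + ey*Im(r$2$1) - ex*Re(r$1$2) + ey*Im(r$1$2))/2 + g*Im(r$1$1)"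
  by (simp add: rhs22 field_simps)
lemma re12: "Re (lindblad_rhs (Ham w ex ey) g r $1$2) = (1+w)*Im(r$1$2) + (ex*(Im(r$2$2) - Im(r$1$1)) - ey*(Re(r$2$2)-Re(r$1$1)))/2 - g/2*Re(r$1$2)"
  by (simp add: rhs12 field_simps)
lemma im12: "Im (lindblad_rhs (Ham w ex ey) g r $1$2) = -(1+w)*Re(r$1$2) - (ex*(Re(r$2$2) - Re(r$1$1)) + ey*(Im(r$2$2)-Im(r$1$1)))/2 - g/2*Im(r$1$2)"
  by (simp add: rhs12 field_simps)
lemma re21: "Re (lindblad_rhs (Ham w ex ey) g r $2$1) = (ex*(Im(r$1$1) - Im(r$2$2)) + ey*(Re(r$1$1)-Re(r$2$2)))/2 - (1+w)*Im(r$2$1) - g/2*Re(r$2$1)"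
  by (simp add: rhs21 field_simps)
lemma im21: "Im (lindblad_rhs (Ham w ex ey) g r $2$1) = -(ex*(Re(r$1$1) - Re(r$2$2)) - ey*(Im(r$1$1)-Im(r$2$2)))/2 + (1+w)*Re(r$2$1) - g/2*Im(r$2$1)"
  by (simp add: rhs21 field_simps)

lemma incr_between:
  fixes f f' :: "real \<Rightarrow> real"
  assumes d: "\<And>t. t \<ge> 0 \<Longrightarrow> (f has_real_derivative f' t) (at t within {0..})"
    and a: "0 \<le> a" "a \<le> b"
    and pos: "\<And>t. a < t \<Longrightarrow> t < b \<Longrightarrow> f' t \<ge> 0"
  shows "f a \<le> f b"
proof (rule DERIV_nonneg_imp_increasing_open[OF a(2)])
  fix x assume x: "a < x" "x < b"
  have "(f has_real_derivative f' x) (at x within {0<..})"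
    by (rule DERIV_subset[OF d[of x]]) (use x a in auto)
  then have "(f has_real_derivative f' x) (at x)"
    using x a at_within_open[of x "{0<..}"] by simp
  then show "\<exists>y. (f has_real_derivative y) (at x) \<and> 0 \<le> y" using pos x by blast
next
  have "continuous_on {0..} f" by (rule DERIV_continuous_on[OF d]) auto
  then show "continuous_on {a..b} f" by (rule continuous_on_subset) (use a in auto)
qed

lemma incr:
  fixes f f' :: "real \<Rightarrow> real"
  assumes d: "\<And>t. t \<ge> 0 \<Longrightarrow> (f has_real_derivative f' t) (at t within {0..})"
    and pos: "\<And>t. t \<ge> 0 \<Longrightarrow> f' t \<ge> 0" and t: "t \<ge> 0"
  shows "f 0 \<le> f t"
  by (rule incr_between[OF d]) (use pos t in auto)

lemma stay_nonneg:
  fixes f f' :: "real \<Rightarrow> real"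
  assumes d: "\<And>t. t \<ge> 0 \<Longrightarrow> (f has_real_derivative f' t) (at t within {0..})"
    and f0: "f 0 \<ge> 0"
    and pos: "\<And>t. t \<ge> 0 \<Longrightarrow> f t < 0 \<Longrightarrow> f' t \<ge> 0" and t: "t \<ge> 0"
  shows "f t \<ge> 0"
proof (rule ccontr)
  assume neg: "\<not> f t \<ge> 0"
  have c: "continuous_on {0..} f" by (rule DERIV_continuous_on[OF d]) auto
  then have "continuous_on {0..t} f" by (rule continuous_on_subset) auto
  then have "closed ({0..t} \<inter> f -` {0..})"
    by (rule continuous_closed_preimage) (auto simp: closed_atLeast)
  moreover have "bounded ({0..t} \<inter> f -` {0..})"
    by (rule bounded_subset[of "{0..t}"]) auto
  ultimately have "compact ({0..t} \<inter> f -` {0..})"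
    by (simp add: compact_eq_bounded_closed)
  moreover have "0 \<in> {0..t} \<inter> f -` {0..}" using f0 t by auto
  ultimately obtain s where s: "s \<in> {0..t} \<inter> f -` {0..}"
    and mx: "\<And>y. y \<in> {0..t} \<inter> f -` {0..} \<Longrightarrow> y \<le> s"
    using compact_attains_sup[of "{0..t} \<inter> f -` {0..}"] by blast
  have "s \<le> t" "s \<ge> 0" "f s \<ge> 0" using s by auto
  have "f s \<le> f t"
  proof (rule incr_between[OF d])
    show "0 \<le> s" "s \<le> t" using s by auto
    fix x assume x: "s < x" "x < t"
    have "f x < 0"
    proof (rule ccontr)
      assume "\<not> f x < 0"
      then have "x \<in> {0..t} \<inter> f -` {0..}" using x \<open>s \<ge> 0\<close> by auto
      then show False using mx[of x] x by linarith
    qed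
    then show "f' x \<ge> 0" using pos[of x] x \<open>s \<ge> 0\<close> by auto
  qed
  then show False using neg \<open>f s \<ge> 0\<close> by auto
qed

lemma const:
  fixes f f' :: "real \<Rightarrow> real"
  assumes d: "\<And>t. t \<ge> 0 \<Longrightarrow> (f has_real_derivative f' t) (at t within {0..})"
    and z: "\<And>t. t \<ge> 0 \<Longrightarrow> f' t = 0" and t: "t \<ge> 0"
  shows "f t = f 0"
proof -
  have "f 0 \<le> f t" by (rule incr[OF d]) (use z t in auto)
  moreover have "(\<lambda>t. - f t) 0 \<le> (\<lambda>t. - f t) t"
  proof (rule incr[of _ "\<lambda>t. - f' t"])
    fix s :: real assume "s \<ge> 0"
    then show "((\<lambda>t. - f t) has_real_derivative - f' s) (at s within {0..})"
      by (intro DERIV_minus d)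
  qed (use z t in auto)
  ultimately show ?thesis by simp
qed

lemma cs: "\<bar>a*b + c*d\<bar> \<le> sqrt (a^2+c^2) * sqrt (b^2+d^2)"
proof (rule power2_le_imp_le)
  have "(a*b + c*d)^2 \<le> (a^2+c^2)*(b^2+d^2)"
  proof -
    have "(a^2+c^2)*(b^2+d^2) - (a*b + c*d)^2 = (a*d - c*b)^2" by (simp add: power2_eq_square algebra_simps)
    then show ?thesis by (metis diff_ge_0_iff_ge zero_le_power2)
  qed
  then show "\<bar>a*b + c*d\<bar>^2 \<le> (sqrt (a^2+c^2) * sqrt (b^2+d^2))^2"
    by (simp add: power_mult_distrib)
qed simp

theorem theorem2:
  fixes p0 eps w gamma0 gamma :: real
    and wf epsx epsy dgamma :: "real \<Rightarrow> real"
    and rho :: "real \<Rightarrow> complex ^ 2 ^ 2"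
  assumes "0 < p0" and "p0 < 1" and "eps > 0" and "w \<ge> 0"
    and "gamma0 \<ge> gamma" and "gamma \<ge> 0"
    and "\<And>t. \<bar>wf t\<bar> \<le> w"
    and "\<And>t. sqrt ((epsx t)^2 + (epsy t)^2) \<le> eps"
    and "\<And>t. \<bar>dgamma t\<bar> \<le> gamma"
    and "\<And>t. t \<ge> 0 \<Longrightarrow>
           (rho has_vector_derivative
              lindblad_rhs (Ham (wf t) (epsx t) (epsy t)) (gamma0 + dgamma t) (rho t))
             (at t within {0..})"
    and "rho 0 = outer ket0 ket0"
  shows "\<forall>t \<in> {0 .. T_a p0 eps gamma0 gamma}. rho t \<in> D_a p0"
proof -
  define g where "g = (\<lambda>t. gamma0 + dgamma t)"
  define L where "L = (\<lambda>t. lindblad_rhs (Ham (wf t) (epsx t) (epsy t)) (g t) (rho t))"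
  define Gm where "Gm = gamma0 + gamma"
  have g0: "0 \<le> g t" for t using assms(9)[of t] assms(5) assms(6) unfolding g_def abs_le_iff by linarith
  have gG: "g t \<le> Gm" for t using assms(9)[of t] unfolding g_def Gm_def abs_le_iff by linarith
  have dr: "(rho has_vector_derivative L t) (at t within {0..})" if "t \<ge> 0" for t
    using assms(10)[OF that] unfolding L_def g_def by simp
  have dRe: "((\<lambda>t. Re (rho t $ i $ j)) has_real_derivative Re (L t $ i $ j)) (at t within {0..})"
    if "t \<ge> 0" for t i j
  proof -
    have bl: "bounded_linear (\<lambda>x::complex^2^2. Re (x $ i $ j))"
      using bounded_linear_compose[OF bounded_linear_Re bounded_linear_compose[OF bounded_linear_vec_nth[of j] bounded_linear_vec_nth[of i]]] by simp
    show ?thesis using bounded_linear.has_vector_derivative[OF bl dr[OF that]]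
      by (simp add: has_real_derivative_iff_has_vector_derivative)
  qed
  have dIm: "((\<lambda>t. Im (rho t $ i $ j)) has_real_derivative Im (L t $ i $ j)) (at t within {0..})"
    if "t \<ge> 0" for t i j
  proof -
    have bl: "bounded_linear (\<lambda>x::complex^2^2. Im (x $ i $ j))"
      using bounded_linear_compose[OF bounded_linear_Im bounded_linear_compose[OF bounded_linear_vec_nth[of j] bounded_linear_vec_nth[of i]]] by simp
    show ?thesis using bounded_linear.has_vector_derivative[OF bl dr[OF that]]
      by (simp add: has_real_derivative_iff_has_vector_derivative)
  qed
  define A1 where "A1 = (\<lambda>t. Re (rho t $1$1))"
  define A2 where "A2 = (\<lambda>t. Im (rho t $1$1))"
  define B1 where "B1 = (\<lambda>t. Re (rho t $1$2))"
  define B2 where "B2 = (\<lambda>t. Im (rho t $1$2))"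
  define C1 where "C1 = (\<lambda>t. Re (rho t $2$1))"
  define C2 where "C2 = (\<lambda>t. Im (rho t $2$1))"
  define D1 where "D1 = (\<lambda>t. Re (rho t $2$2))"
  define D2 where "D2 = (\<lambda>t. Im (rho t $2$2))"
  define a1' where "a1' = (\<lambda>t. (epsx t*C2 t - epsy t*C1 t - epsx t*B2 t - epsy t*B1 t)/2 - g t*A1 t)"
  define a2' where "a2' = (\<lambda>t. -(epsx t*C1 t + epsy t*C2 t - epsx t*B1 t + epsy t*B2 t)/2 - g t*A2 t)"
  define d1' where "d1' = (\<lambda>t. -(epsx t*C2 t - epsy t*C1 t - epsx t*B2 t - epsy t*B1 t)/2 + g t*A1 t)"
  define d2' where "d2' = (\<lambda>t. (epsx t*C1 t + epsy t*C2 t - epsx t*B1 t + epsy t*B2 t)/2 + g t*A2 t)"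
  define b1' where "b1' = (\<lambda>t. (1+wf t)*B2 t + (epsx t*(D2 t - A2 t) - epsy t*(D1 t - A1 t))/2 - g t/2*B1 t)"
  define b2' where "b2' = (\<lambda>t. -(1+wf t)*B1 t - (epsx t*(D1 t - A1 t) + epsy t*(D2 t - A2 t))/2 - g t/2*B2 t)"
  define c1' where "c1' = (\<lambda>t. (epsx t*(A2 t - D2 t) + epsy t*(A1 t - D1 t))/2 - (1+wf t)*C2 t - g t/2*C1 t)"
  define c2' where "c2' = (\<lambda>t. -(epsx t*(A1 t - D1 t) - epsy t*(A2 t - D2 t))/2 + (1+wf t)*C1 t - g t/2*C2 t)"
  have dA1: "(A1 has_real_derivative a1' t) (at t within {0..})" if "t \<ge> 0" for t
    using dRe[OF that, of 1 1] unfolding A1_def a1'_def L_def re11 A2_def B1_def B2_def C1_def C2_def D1_def D2_def by simp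
  have dA2: "(A2 has_real_derivative a2' t) (at t within {0..})" if "t \<ge> 0" for t
    using dIm[OF that, of 1 1] unfolding A1_def a2'_def L_def im11 A2_def B1_def B2_def C1_def C2_def D1_def D2_def by simp
  have dD1: "(D1 has_real_derivative d1' t) (at t within {0..})" if "t \<ge> 0" for t
    using dRe[OF that, of 2 2] unfolding A1_def d1'_def L_def re22 A2_def B1_def B2_def C1_def C2_def D1_def D2_def by simp
  have dD2: "(D2 has_real_derivative d2' t) (at t within {0..})" if "t \<ge> 0" for t
    using dIm[OF that, of 2 2] unfolding A1_def d2'_def L_def im22 A2_def B1_def B2_def C1_def C2_def D1_def D2_def by simp
  have dB1: "(B1 has_real_derivative b1' t) (at t within {0..})" if "t \<ge> 0" for t
    using dRe[OF that, of 1 2] unfolding A1_def b1'_def L_def re12 A2_def B1_def B2_def C1_def C2_def D1_def D2_def by simp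
  have dB2: "(B2 has_real_derivative b2' t) (at t within {0..})" if "t \<ge> 0" for t
    using dIm[OF that, of 1 2] unfolding A1_def b2'_def L_def im12 A2_def B1_def B2_def C1_def C2_def D1_def D2_def by simp
  have dC1: "(C1 has_real_derivative c1' t) (at t within {0..})" if "t \<ge> 0" for t
    using dRe[OF that, of 2 1] unfolding A1_def c1'_def L_def re21 A2_def B1_def B2_def C1_def C2_def D1_def D2_def by simp
  have dC2: "(C2 has_real_derivative c2' t) (at t within {0..})" if "t \<ge> 0" for t
    using dIm[OF that, of 2 1] unfolding A1_def c2'_def L_def im21 A2_def B1_def B2_def C1_def C2_def D1_def D2_def by simp
  have init: "A1 0 = 1" "A2 0 = 0" "B1 0 = 0" "B2 0 = 0" "C1 0 = 0" "C2 0 = 0" "D1 0 = 0" "D2 0 = 0"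
    by (simp_all add: A1_def A2_def B1_def B2_def C1_def C2_def D1_def D2_def assms(11) out mat2_def)
  have tr1: "D1 t = 1 - A1 t" if "t \<ge> 0" for t
  proof -
    have d: "((\<lambda>t. A1 t + D1 t) has_real_derivative (a1' s + d1' s)) (at s within {0..})" if "s \<ge> 0" for s
      by (rule DERIV_add) (use that in \<open>auto intro: dA1 dD1\<close>)
    have z: "a1' s + d1' s = 0" if "s \<ge> 0" for s unfolding a1'_def d1'_def by (simp add: field_simps)
    show ?thesis using const[OF d z that] init by simp
  qed
  have tr2: "D2 t = - A2 t" if "t \<ge> 0" for t
  proof -
    have d: "((\<lambda>t. A2 t + D2 t) has_real_derivative (a2' s + d2' s)) (at s within {0..})" if "s \<ge> 0" for s
      by (rule DERIV_add) (use that in \<open>auto intro: dA2 dD2\<close>)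
    have z: "a2' s + d2' s = 0" if "s \<ge> 0" for s unfolding a2'_def d2'_def by (simp add: field_simps)
    show ?thesis using const[OF d z that] init by simp
  qed
  define E where "E = (\<lambda>t. 4*(A2 t*A2 t) + (B1 t - C1 t)*(B1 t - C1 t) + (B2 t + C2 t)*(B2 t + C2 t))"
  define E' where "E' = (\<lambda>t. 8*A2 t*a2' t + 2*(B1 t - C1 t)*(b1' t - c1' t) + 2*(B2 t + C2 t)*(b2' t + c2' t))"
  have dE: "((\<lambda>t. - E t) has_real_derivative - E' s) (at s within {0..})" if "s \<ge> 0" for s
    unfolding E_def E'_def
    by (auto intro!: derivative_eq_intros dA2[OF that] dB1[OF that] dB2[OF that] dC1[OF that] dC2[OF that] simp: algebra_simps)
  have E'eq: "E' s = - g s * (8*(A2 s*A2 s) + (B1 s - C1 s)*(B1 s - C1 s) + (B2 s + C2 s)*(B2 s + C2 s))" if "s \<ge> 0" for s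
    unfolding E'_def a2'_def b1'_def b2'_def c1'_def c2'_def using tr2[OF that]
    by (simp add: field_simps)
  have herm: "A2 t = 0 \<and> C1 t = B1 t \<and> C2 t = - B2 t" if "t \<ge> 0" for t
  proof -
    have "(\<lambda>t. - E t) 0 \<le> (\<lambda>t. - E t) t"
    proof (rule incr[OF dE])
      fix s :: real assume s: "s \<ge> 0"
      have "0 \<le> g s * (8*(A2 s*A2 s) + (B1 s - C1 s)*(B1 s - C1 s) + (B2 s + C2 s)*(B2 s + C2 s))"
        using g0[of s] by (intro mult_nonneg_nonneg) auto
      then show "0 \<le> - E' s" using E'eq[OF s] by simp
    qed (use that in auto)
    then have "E t \<le> 0" using init by (simp add: E_def)
    then have "A2 t * A2 t = 0 \<and> (B1 t - C1 t)*(B1 t - C1 t) = 0 \<and> (B2 t + C2 t)*(B2 t + C2 t) = 0"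
      unfolding E_def
      by (smt (verit) zero_le_square)
    then show ?thesis by auto
  qed
  (* determinant *)
  define Dv where "Dv = (\<lambda>t. A1 t*(1 - A1 t) - B1 t*B1 t - B2 t*B2 t)"
  define Dv' where "Dv' = (\<lambda>t. (1 - 2*A1 t)*a1' t - 2*B1 t*b1' t - 2*B2 t*b2' t)"
  have dDv: "(Dv has_real_derivative Dv' s) (at s within {0..})" if "s \<ge> 0" for s
    unfolding Dv_def Dv'_def
    by (auto intro!: derivative_eq_intros dA1[OF that] dB1[OF that] dB2[OF that] simp: algebra_simps)
  have Dv'eq: "Dv' s = g s * (A1 s * A1 s - Dv s)" if "s \<ge> 0" for s
    unfolding Dv'_def Dv_def a1'_def b1'_def b2'_def
    by (simp add: herm[OF that] tr1[OF that] tr2[OF that] field_simps)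
  have Dpos: "0 \<le> Dv t" if "t \<ge> 0" for t
  proof (rule stay_nonneg[OF dDv])
    show "0 \<le> Dv 0" using init by (simp add: Dv_def)
    fix s :: real assume s: "s \<ge> 0" "Dv s < 0"
    have "0 \<le> A1 s * A1 s - Dv s" using s(2) zero_le_square[of "A1 s"] by linarith
    then show "0 \<le> Dv' s" using Dv'eq[OF s(1)] g0[of s] by simp
  qed (use that in auto)
  have A1b: "0 \<le> A1 t \<and> A1 t \<le> 1" if "t \<ge> 0" for t
  proof -
    have "0 \<le> A1 t * (1 - A1 t)"
      using Dpos[OF that] zero_le_square[of "B1 t"] zero_le_square[of "B2 t"] unfolding Dv_def by linarith
    then show ?thesis by (smt (verit) mult_pos_neg mult_neg_pos)
  qed
  have epsb: "sqrt ((epsy t)^2 + (epsx t)^2) \<le> eps" for t using assms(8)[of t] by (simp add: add.commute)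
  have bbound: "sqrt (B1 t^2 + B2 t^2) \<le> eps*t/2" if t0: "t \<ge> 0" for t
  proof (rule field_le_epsilon)
    fix \<delta>::real assume \<delta>: "0 < \<delta>"
    define Q where "Q = (\<lambda>t. B1 t*B1 t + B2 t*B2 t + \<delta>*\<delta>)"
    define Q' where "Q' = (\<lambda>t. 2*B1 t*b1' t + 2*B2 t*b2' t)"
    have Qpos: "0 < Q s" for s using \<delta> zero_le_square[of "B1 s"] zero_le_square[of "B2 s"] mult_pos_pos[OF \<delta> \<delta>]
      unfolding Q_def by linarith
    have dQ: "(Q has_real_derivative Q' s) (at s within {0..})" if "s \<ge> 0" for s
      unfolding Q_def Q'_def
      by (auto intro!: derivative_eq_intros dB1[OF that] dB2[OF that] simp: algebra_simps)
    have dS: "((\<lambda>t. eps*t/2 - sqrt (Q t)) has_real_derivative (eps/2 - inverse (sqrt (Q s))/2 * Q' s)) (at s within {0..})"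
      if "s \<ge> 0" for s
    proof -
      have "((\<lambda>t. sqrt (Q t)) has_real_derivative inverse (sqrt (Q s))/2 * Q' s) (at s within {0..})"
        by (rule DERIV_chain'[OF dQ[OF that] DERIV_real_sqrt[OF Qpos]])
      then show ?thesis by (rule DERIV_diff[rotated]) (auto intro!: derivative_eq_intros)
    qed
    have Q'le: "Q' s \<le> eps * sqrt (Q s)" if s: "s \<ge> 0" for s
    proof -
      define X where "X = epsy s*B1 s + epsx s*B2 s"
      have Q'eq: "Q' s = - ((1 - 2*A1 s)*X) - g s*(B1 s*B1 s + B2 s*B2 s)"
        unfolding Q'_def b1'_def b2'_def X_def
        by (simp add: herm[OF s] tr1[OF s] tr2[OF s] field_simps)
      have "\<bar>(1 - 2*A1 s)*X\<bar> = \<bar>1 - 2*A1 s\<bar>*\<bar>X\<bar>" by (rule abs_mult)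
      also have "\<dots> \<le> 1*\<bar>X\<bar>" by (rule mult_right_mono) (use A1b[OF s] in auto)
      finally have h1: "- ((1 - 2*A1 s)*X) \<le> \<bar>X\<bar>" by linarith
      have h2: "0 \<le> g s*(B1 s*B1 s + B2 s*B2 s)" using g0[of s] by (intro mult_nonneg_nonneg) auto
      have "\<bar>X\<bar> \<le> sqrt ((epsy s)^2 + (epsx s)^2) * sqrt ((B1 s)^2 + (B2 s)^2)"
        unfolding X_def by (rule cs)
      also have "\<dots> \<le> eps * sqrt ((B1 s)^2 + (B2 s)^2)" by (rule mult_right_mono) (use epsb in auto)
      also have "\<dots> \<le> eps * sqrt (Q s)"
        by (rule mult_left_mono) (use assms(3) \<delta> in \<open>auto simp: Q_def power2_eq_square\<close>)
      finally show ?thesis using Q'eq h1 h2 by linarith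
    qed
    have "(\<lambda>t. eps*t/2 - sqrt (Q t)) 0 \<le> (\<lambda>t. eps*t/2 - sqrt (Q t)) t"
    proof (rule incr[OF dS])
      fix s :: real assume s: "0 \<le> s"
      have rt: "0 < sqrt (Q s)" using Qpos[of s] by simp
      have "inverse (sqrt (Q s)) * Q' s \<le> inverse (sqrt (Q s)) * (eps * sqrt (Q s))"
        by (rule mult_left_mono) (use Q'le[OF s] rt in auto)
      also have "\<dots> = eps" using rt by simp
      finally show "0 \<le> eps/2 - inverse (sqrt (Q s))/2 * Q' s" by simp
    qed (use t0 in auto)
    then have "sqrt (Q t) \<le> eps*t/2 + \<delta>" using init \<delta> by (simp add: Q_def real_sqrt_mult_self)
    moreover have "sqrt (B1 t^2 + B2 t^2) \<le> sqrt (Q t)"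
      using \<delta> by (simp add: Q_def power2_eq_square)
    ultimately show "sqrt (B1 t^2 + B2 t^2) \<le> eps*t/2 + \<delta>" by linarith
  qed
  have pbound: "1 - A1 t \<le> Gm*t + eps^2*t*t/4" if t0: "t \<ge> 0" for t
  proof -
    have dF: "((\<lambda>t. Gm*t + eps^2*t*t/4 + A1 t) has_real_derivative (Gm + eps^2* s /2 + a1' s)) (at s within {0..})"
      if "s \<ge> 0" for s
      by (auto intro!: derivative_eq_intros dA1[OF that] simp: field_simps)
    have "(\<lambda>t. Gm*t + eps^2*t*t/4 + A1 t) 0 \<le> (\<lambda>t. Gm*t + eps^2*t*t/4 + A1 t) t"
    proof (rule incr[OF dF])
      fix s :: real assume s: "0 \<le> s"
      define X where "X = epsx s*B2 s + epsy s*B1 s"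
      have a1eq: "a1' s = - X - g s * A1 s"
        unfolding a1'_def X_def by (simp add: herm[OF s] tr1[OF s] tr2[OF s] field_simps)
      have "\<bar>X\<bar> \<le> sqrt ((epsx s)^2 + (epsy s)^2) * sqrt ((B2 s)^2 + (B1 s)^2)"
        unfolding X_def by (rule cs)
      also have "\<dots> \<le> eps * sqrt ((B2 s)^2 + (B1 s)^2)" by (rule mult_right_mono) (use assms(8) in auto)
      also have "\<dots> \<le> eps * (eps* s /2)"
        by (rule mult_left_mono) (use bbound[OF s] assms(3) in \<open>auto simp: add.commute\<close>)
      finally have h1: "\<bar>X\<bar> \<le> eps^2* s /2" by (simp add: power2_eq_square)
      have "g s * A1 s \<le> g s * 1" by (rule mult_left_mono) (use A1b[OF s] g0[of s] in auto)
      then show "0 \<le> Gm + eps^2* s /2 + a1' s" using a1eq h1 gG[of s] by linarith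
    qed (use t0 in auto)
    then show ?thesis using init by simp
  qed
  have Gm0: "0 \<le> Gm" using assms(5,6) by (simp add: Gm_def)
  have Tbound: "Gm*t + eps^2*t*t/4 \<le> p0" if t0: "0 \<le> t" and tT: "t \<le> T_a p0 eps gamma0 gamma" for t
  proof -
    define rt where "rt = sqrt (4*eps^2 + Gm^2)"
    define k where "k = rt + Gm"
    define T where "T = T_a p0 eps gamma0 gamma"
    have ss: "rt*rt = 4*eps^2 + Gm^2" unfolding rt_def by (simp add: add_nonneg_nonneg)
    have rtpos: "0 < rt" unfolding rt_def using assms(3) by (simp add: add_pos_nonneg)
    have kpos: "0 < k" using rtpos Gm0 by (simp add: k_def)
    have TT: "T = 2*p0/k" by (simp add: T_def T_a_def k_def rt_def Gm_def)
    have kk: "k*k = 4*eps^2 + 2*Gm*k" using ss by (simp add: k_def algebra_simps power2_eq_square)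
    have T0: "0 \<le> T" using TT kpos assms(1) by simp
    have "Gm*t \<le> Gm*T" by (rule mult_left_mono) (use tT Gm0 in \<open>auto simp: T_def\<close>)
    moreover have "t*t \<le> T*T" by (rule mult_mono) (use tT t0 T0 in \<open>auto simp: T_def\<close>)
    then have "eps^2*t*t/4 \<le> eps^2*T*T/4"
      by (simp add: mult.assoc divide_right_mono mult_left_mono)
    ultimately have h1: "Gm*t + eps^2*t*t/4 \<le> Gm*T + eps^2*T*T/4" by linarith
    have h2: "Gm*T + eps^2*T*T/4 = (2*p0*Gm*k + eps^2*p0*p0)/(k*k)"
      using kpos by (simp add: TT field_simps power2_eq_square)
    have "eps^2*p0*p0 \<le> eps^2*p0*4"
      by (rule mult_left_mono) (use assms(1,2) in auto)
    moreover have "p0*(k*k) = 4*eps^2*p0 + 2*p0*Gm*k" by (simp add: kk algebra_simps)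
    ultimately have "2*p0*Gm*k + eps^2*p0*p0 \<le> p0*(k*k)" by linarith
    then have "(2*p0*Gm*k + eps^2*p0*p0)/(k*k) \<le> p0*(k*k)/(k*k)"
      by (rule divide_right_mono) (use kpos in simp)
    also have "\<dots> = p0" using kpos by simp
    finally show ?thesis using h1 h2 by linarith
  qed
  show ?thesis
  proof
    fix t assume t: "t \<in> {0..T_a p0 eps gamma0 gamma}"
    then have t0: "0 \<le> t" and tT: "t \<le> T_a p0 eps gamma0 gamma" by auto
    have "Im (rho t $1$1) = 0" using herm[OF t0] by (simp add: A2_def)
    moreover have "Re (rho t $1$1) \<ge> 1 - p0" using pbound[OF t0] Tbound[OF t0 tT] unfolding A1_def by linarith
    ultimately show "rho t \<in> D_a p0" by (simp add: D_a_def complex_is_Real_iff mel)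
  qed
qed

end
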